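(* Let $K$ be a field, $P=K[x_1,\dots,x_n]$, and $\sigma$ a term ordering on $\mathbb{T}^n$. Let $J$ be an ideal in $P$ and let $F$ be a set of non-zero polynomials in $J$. Then: (a) $O_\sigma(J)=O_\sigma(F)$ if and only if $F$ is a $\sigma$-Gröbner basis of $J$; (b) if $F$ is not a $\sigma$-Gröbner basis of $J$, then $O_\sigma(J)\prec_\sigma O_\sigma(F)$.
   Context: $\mathbb{T}^n$ is the monoid of power-products in $x_1,\dots,x_n$. A tuple $(t_1,\dots,t_r)$ of distinct power-products is $\sigma$-ordered if $t_1<_\sigma\cdots<_\sigma t_r$ (the empty tuple is $\sigma$-ordered). The interreduction of a set $T$ of power-products is the set of elements of $T$ not divisible by any other element of $T$. For a set $F$ of non-zero polynomials, $O_\sigma(F)$ is the $\sigma$-ordered tuple of the interreduction of $\{\mathrm{LT}_\sigma(f):f\in F\}$. For an ideal $I$, $O_\sigma(I)$ is the $\sigma$-ordered tuple of the leading terms of a minimal $\sigma$-Gröbner basis of $I$ (equivalently, of the minimal power-product generators of $\mathrm{LT}_\sigma(I)$); it is the empty tuple if $I=0$. For $\sigma$-ordered tuples $T=(t_1,\dots,t_r)$ and $T'=(t'_1,\dots,t'_{r'})$, $T'\prec_\sigma T$ ($T'$ $\sigma$-precedes $T$) means either $T$ is a proper prefix of $T'$ (i.e. $r<r'$ and $t_i=t'_i$ for $i\le r$), or there is $k\le\min(r,r')$ with $t_i=t'_i$ for $i<k$ and $t'_k<_\sigma t_k$. *)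

theory Defs
  imports Main "HOL-Library.Poly_Mapping"
begin

(* Power-products in the variables of the finite type 'x (so n = CARD('x)) are
  finitely supported exponent vectors 'x \<Rightarrow>\<^sub>0 nat; multiplication of power-products
  is addition of exponent vectors, and 1 is 0.  Polynomials over K are
  ('x \<Rightarrow>\<^sub>0 nat) \<Rightarrow>\<^sub>0 K (finitely supported coefficient functions) with the
  convolution product from Poly_Mapping. *)

type_synonym 'x pp = "'x \<Rightarrow>\<^sub>0 nat"
type_synonym ('x, 'a) mpoly = "'x pp \<Rightarrow>\<^sub>0 'a"

definition pp_dvd :: "'x pp \<Rightarrow> 'x pp \<Rightarrow> bool" where
  "pp_dvd s t \<longleftrightarrow> (\<exists>u. t = s + u)"

definition term_ordering :: "('x pp \<Rightarrow> 'x pp \<Rightarrow> bool) \<Rightarrow> bool" where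
  "term_ordering le \<longleftrightarrow>
     (\<forall>t. le t t) \<and>
     (\<forall>s t. le s t \<and> le t s \<longrightarrow> s = t) \<and>
     (\<forall>s t u. le s t \<and> le t u \<longrightarrow> le s u) \<and>
     (\<forall>s t. le s t \<or> le t s) \<and>
     (\<forall>t. le 0 t) \<and>
     (\<forall>s t u. le s t \<longrightarrow> le (s + u) (t + u))"

definition lt_ord :: "('x pp \<Rightarrow> 'x pp \<Rightarrow> bool) \<Rightarrow> 'x pp \<Rightarrow> 'x pp \<Rightarrow> bool" where
  "lt_ord le s t \<longleftrightarrow> le s t \<and> s \<noteq> t"

definition LT :: "('x pp \<Rightarrow> 'x pp \<Rightarrow> bool) \<Rightarrow> ('x, 'a::zero) mpoly \<Rightarrow> 'x pp" where
  "LT le f = (THE t. t \<in> Poly_Mapping.keys f \<and> (\<forall>s \<in> Poly_Mapping.keys f. le s t))"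

definition is_ideal :: "('x, 'a::comm_ring_1) mpoly set \<Rightarrow> bool" where
  "is_ideal J \<longleftrightarrow> 0 \<in> J \<and> (\<forall>f\<in>J. \<forall>g\<in>J. f + g \<in> J) \<and> (\<forall>p f. f \<in> J \<longrightarrow> p * f \<in> J)"

definition groebner_basis ::
  "('x pp \<Rightarrow> 'x pp \<Rightarrow> bool) \<Rightarrow> ('x, 'a::comm_ring_1) mpoly set \<Rightarrow> ('x, 'a) mpoly set \<Rightarrow> bool" where
  "groebner_basis le F J \<longleftrightarrow> F \<subseteq> J - {0} \<and>
     (\<forall>f\<in>J - {0}. \<exists>g\<in>F. pp_dvd (LT le g) (LT le f))"

definition interreduction :: "'x pp set \<Rightarrow> 'x pp set" where
  "interreduction T = {t \<in> T. \<not> (\<exists>s\<in>T. s \<noteq> t \<and> pp_dvd s t)}"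

definition sigma_ordered :: "('x pp \<Rightarrow> 'x pp \<Rightarrow> bool) \<Rightarrow> 'x pp list \<Rightarrow> bool" where
  "sigma_ordered le ts \<longleftrightarrow> sorted_wrt (lt_ord le) ts"

definition ordered_tuple :: "('x pp \<Rightarrow> 'x pp \<Rightarrow> bool) \<Rightarrow> 'x pp set \<Rightarrow> 'x pp list" where
  "ordered_tuple le T = (THE ts. sigma_ordered le ts \<and> set ts = T)"

definition O_set :: "('x pp \<Rightarrow> 'x pp \<Rightarrow> bool) \<Rightarrow> ('x, 'a::zero) mpoly set \<Rightarrow> 'x pp list" where
  "O_set le F = ordered_tuple le (interreduction (LT le ` F))"

(* O_sigma(I) for an ideal I: the sigma-ordered tuple of the minimal power-product
  generators of LT_sigma(I) = monoid ideal generated by the leading terms of the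
  non-zero elements of I (empty if I = 0). *)
definition O_ideal :: "('x pp \<Rightarrow> 'x pp \<Rightarrow> bool) \<Rightarrow> ('x, 'a::zero) mpoly set \<Rightarrow> 'x pp list" where
  "O_ideal le I = ordered_tuple le
     {t. (\<exists>f\<in>I - {0}. pp_dvd (LT le f) t) \<and>
         \<not> (\<exists>s. s \<noteq> t \<and> pp_dvd s t \<and> (\<exists>f\<in>I - {0}. pp_dvd (LT le f) s))}"

definition sigma_precedes :: "('x pp \<Rightarrow> 'x pp \<Rightarrow> bool) \<Rightarrow> 'x pp list \<Rightarrow> 'x pp list \<Rightarrow> bool" where
  "sigma_precedes le T' T \<longleftrightarrow>
     (length T < length T' \<and> take (length T) T' = T) \<or>
     (\<exists>k < min (length T) (length T'). take k T' = take k T \<and> lt_ord le (T' ! k) (T ! k))"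

end

theory Submission
  imports Defs
begin

section \<open>Dickson\<close>

lemma nat_mono_subseq:
  fixes s :: "nat \<Rightarrow> nat"
  shows "\<exists>f. strict_mono f \<and> (\<forall>n. s (f n) \<le> s (f (Suc n)))"
proof -
  define mv where "mv k = (LEAST v. \<exists>j\<ge>k. s j = v)" for k
  define pos where "pos k = (SOME j. j \<ge> k \<and> s j = mv k)" for k
  have mvex: "\<exists>j\<ge>k. s j = mv k" for k
    unfolding mv_def by (rule LeastI[of _ "s k"]) auto
  have pos: "pos k \<ge> k \<and> s (pos k) = mv k" for k
    unfolding pos_def using someI_ex[OF mvex[of k]] by blast
  have mvle: "mv k \<le> s j" if "j \<ge> k" for k j
    unfolding mv_def using that by (intro Least_le) auto
  define f where "f = rec_nat (pos 0) (\<lambda>_ a. pos (Suc a))"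
  have f0: "f 0 = pos 0" and fS: "f (Suc n) = pos (Suc (f n))" for n
    by (simp_all add: f_def)
  have "strict_mono f"
    unfolding strict_mono_Suc_iff by (metis fS pos Suc_le_eq)
  moreover have "s (f n) \<le> s (f (Suc n))" for n
  proof -
    have "\<exists>k. k \<le> f n \<and> s (f n) = mv k"
      by (cases n) (use pos f0 fS in auto)
    then obtain k where k: "k \<le> f n" "s (f n) = mv k" by blast
    have "s (f (Suc n)) = mv (Suc (f n))" using pos fS by simp
    also have "\<dots> = s (pos (Suc (f n)))" using pos by simp
    finally show ?thesis using k mvle[of k "pos (Suc (f n))"] pos[of "Suc (f n)"] by simp
  qed
  ultimately show ?thesis by blast
qed

lemma mono_chain:
  assumes "\<forall>n. r (s n) (s (Suc n))" "\<And>a b c. r a b \<Longrightarrow> r b c \<Longrightarrow> r a c" "\<And>a. r a a"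
  shows "i \<le> j \<Longrightarrow> r (s i) (s j)"
proof (induction j)
  case 0 then show ?case using assms by simp
next
  case (Suc j)
  then show ?case using assms by (metis le_Suc_eq)
qed

lemma dickson_subseq:
  fixes p :: "nat \<Rightarrow> ('x::finite) pp"
  shows "\<exists>f. strict_mono f \<and> (\<forall>x. \<forall>i j::nat. i \<le> j \<longrightarrow> Poly_Mapping.lookup (p (f i)) x \<le> Poly_Mapping.lookup (p (f j)) x)"
proof -
  have "\<forall>p :: nat \<Rightarrow> 'x pp. \<exists>f. strict_mono f \<and> (\<forall>x\<in>V. \<forall>i j::nat. i \<le> j \<longrightarrow> Poly_Mapping.lookup (p (f i)) x \<le> Poly_Mapping.lookup (p (f j)) x)"
    if "finite V" for V :: "'x set"
    using that
  proof (induction V rule: finite_induct)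
    case empty
    show ?case by (intro allI exI[of _ "\<lambda>n::nat. n"]) (simp add: strict_mono_def)
  next
    case (insert y V)
    show ?case
    proof
    fix p :: "nat \<Rightarrow> 'x pp"
    obtain f where f: "strict_mono f" "\<forall>x\<in>V. \<forall>i j::nat. i \<le> j \<longrightarrow> Poly_Mapping.lookup (p (f i)) x \<le> Poly_Mapping.lookup (p (f j)) x"
      using insert.IH by blast
    obtain g where g: "strict_mono g" "\<forall>n. Poly_Mapping.lookup (p (f (g n))) y \<le> Poly_Mapping.lookup (p (f (g (Suc n)))) y"
      using nat_mono_subseq[of "\<lambda>n. Poly_Mapping.lookup (p (f n)) y"] by blast
    have gy: "Poly_Mapping.lookup (p (f (g i))) y \<le> Poly_Mapping.lookup (p (f (g j))) y" if "i \<le> j" for i j :: nat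
      using mono_chain[of "\<lambda>a b. a \<le> b" "\<lambda>n. Poly_Mapping.lookup (p (f (g n))) y", OF g(2)] that by auto
    have "strict_mono (f \<circ> g)" using f(1) g(1) by (simp add: strict_mono_def)
    moreover have "\<forall>x\<in>insert y V. \<forall>i j::nat. i \<le> j \<longrightarrow> Poly_Mapping.lookup (p ((f \<circ> g) i)) x \<le> Poly_Mapping.lookup (p ((f \<circ> g) j)) x"
    proof (intro ballI allI impI)
      fix x and i j :: nat assume "x \<in> insert y V" "i \<le> j"
      moreover have "g i \<le> g j" using g(1) \<open>i \<le> j\<close> by (simp add: strict_mono_less_eq)
      ultimately show "Poly_Mapping.lookup (p ((f \<circ> g) i)) x \<le> Poly_Mapping.lookup (p ((f \<circ> g) j)) x"
        using f(2) gy by auto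
    qed
    ultimately show "\<exists>f. strict_mono f \<and> (\<forall>x\<in>insert y V. \<forall>i j::nat. i \<le> j \<longrightarrow> Poly_Mapping.lookup (p (f i)) x \<le> Poly_Mapping.lookup (p (f j)) x)" by blast
    qed
  qed
  from this[of UNIV] show ?thesis by simp
qed

lemma pp_dvd_of_le:
  fixes s t :: "'x pp"
  assumes "\<forall>x. Poly_Mapping.lookup s x \<le> Poly_Mapping.lookup t x"
  shows "pp_dvd s t"
  unfolding pp_dvd_def
proof (intro exI[of _ "t - s"])
  show "t = s + (t - s)"
  proof (rule poly_mapping_eqI)
    fix k
    have "Poly_Mapping.lookup s k \<le> Poly_Mapping.lookup t k" using assms by blast
    then show "Poly_Mapping.lookup t k = Poly_Mapping.lookup (s + (t - s)) k"
      by (simp only: lookup_add lookup_minus le_add_diff_inverse)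
  qed
qed

lemma antichain_finite:
  fixes A :: "('x::finite) pp set"
  assumes "\<And>a b. a \<in> A \<Longrightarrow> b \<in> A \<Longrightarrow> pp_dvd a b \<Longrightarrow> a = b"
  shows "finite A"
proof (rule ccontr)
  assume "infinite A"
  have "\<exists>p::nat \<Rightarrow> 'x pp. inj p \<and> range p \<subseteq> A"
    using infinite_iff_countable_subset[THEN iffD1, OF \<open>infinite A\<close>] .
  then obtain p :: "nat \<Rightarrow> 'x pp" where p: "inj p" "range p \<subseteq> A" by (elim exE conjE)
  obtain f where f: "strict_mono f" "\<forall>x. \<forall>i j::nat. i \<le> j \<longrightarrow> Poly_Mapping.lookup (p (f i)) x \<le> Poly_Mapping.lookup (p (f j)) x"
    using dickson_subseq by blast
  have "\<forall>x. Poly_Mapping.lookup (p (f 0)) x \<le> Poly_Mapping.lookup (p (f 1)) x" using f(2) by simp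
  then have "pp_dvd (p (f 0)) (p (f 1))" by (rule pp_dvd_of_le)
  moreover have "p (f 0) \<in> A" "p (f 1) \<in> A" using p(2) by auto
  ultimately have "p (f 0) = p (f 1)" by (intro assms)
  then have "f 0 = f 1" using p(1) by (simp add: inj_eq)
  moreover have "f 0 < f 1" using f(1) by (simp add: strict_mono_def)
  ultimately show False by simp
qed

section \<open>Divisibility well-founded\<close>

definition degp :: "('x::finite) pp \<Rightarrow> nat" where
  "degp t = (\<Sum>x\<in>UNIV. Poly_Mapping.lookup t x)"

lemma pp_dvd_trans: "pp_dvd a b \<Longrightarrow> pp_dvd b c \<Longrightarrow> pp_dvd a c"
  unfolding pp_dvd_def by (metis add.assoc)

lemma pp_dvd_refl: "pp_dvd a a"
  unfolding pp_dvd_def by (metis add.right_neutral)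

lemma degp_less:
  fixes s t :: "('x::finite) pp"
  assumes "pp_dvd s t" "s \<noteq> t"
  shows "degp s < degp t"
proof -
  obtain u where u: "t = s + u" using assms unfolding pp_dvd_def by blast
  then have "u \<noteq> 0" using assms by auto
  then obtain x where x: "Poly_Mapping.lookup u x \<noteq> 0"
    by (metis lookup_zero poly_mapping_eqI)
  have "degp t = degp s + degp u"
    unfolding degp_def u by (simp add: lookup_add sum.distrib)
  moreover have "degp u > 0"
    unfolding degp_def using x by (simp add: sum_pos2[where i=x] sum_nonneg)
  ultimately show ?thesis by simp
qed

lemma minimal_divisor:
  fixes P :: "('x::finite) pp \<Rightarrow> bool"
  assumes "P t"
  shows "\<exists>g. P g \<and> \<not> (\<exists>s. s \<noteq> g \<and> pp_dvd s g \<and> P s) \<and> pp_dvd g t"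
proof -
  obtain g where g: "P g \<and> pp_dvd g t" "\<And>h. P h \<and> pp_dvd h t \<Longrightarrow> degp g \<le> degp h"
    using ex_has_least_nat[of "\<lambda>g. P g \<and> pp_dvd g t" t degp] assms pp_dvd_refl by blast
  have "\<not> (\<exists>s. s \<noteq> g \<and> pp_dvd s g \<and> P s)"
  proof
    assume "\<exists>s. s \<noteq> g \<and> pp_dvd s g \<and> P s"
    then obtain s where s: "s \<noteq> g" "pp_dvd s g" "P s" by blast
    then have "degp s < degp g" using degp_less by blast
    moreover have "degp g \<le> degp s" using g s pp_dvd_trans by blast
    ultimately show False by simp
  qed
  then show ?thesis using g by blast
qed


section \<open>Ordered tuples\<close>

lemma to_props:
  assumes "term_ordering le"
  shows "le t t" "le s t \<Longrightarrow> le t s \<Longrightarrow> s = t" "le s t \<Longrightarrow> le t u \<Longrightarrow> le s u"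
    "le s t \<or> le t s" "pp_dvd g m \<Longrightarrow> le g m"
proof -
  note all = assms[unfolded term_ordering_def]
  note A = all[THEN conjunct1]
  note B = all[THEN conjunct2, THEN conjunct1]
  note C = all[THEN conjunct2, THEN conjunct2, THEN conjunct1]
  note D = all[THEN conjunct2, THEN conjunct2, THEN conjunct2, THEN conjunct1]
  note E = all[THEN conjunct2, THEN conjunct2, THEN conjunct2, THEN conjunct2, THEN conjunct1]
  note F = all[THEN conjunct2, THEN conjunct2, THEN conjunct2, THEN conjunct2, THEN conjunct2]
  show "le t t" using A by simp
  show "le s t \<Longrightarrow> le t s \<Longrightarrow> s = t" using B by simp
  show "le s t \<Longrightarrow> le t u \<Longrightarrow> le s u" using C by blast
  show "le s t \<or> le t s" using D by simp
  assume "pp_dvd g m"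
  then obtain u where u: "m = g + u" unfolding pp_dvd_def by blast
  have "le 0 u" using E by simp
  then have "le (0 + g) (u + g)" using F[rule_format, of 0 u g] by blast
  then show "le g m" using u by (simp add: add.commute)
qed

lemma sorted_distinct:
  assumes "term_ordering le" "sorted_wrt (lt_ord le) xs"
  shows "distinct xs"
  using assms(2) by (induction xs) (auto simp: lt_ord_def)

lemma sorted_unique:
  assumes TO: "term_ordering le"
  shows "sorted_wrt (lt_ord le) xs \<Longrightarrow> sorted_wrt (lt_ord le) ys \<Longrightarrow> set xs = set ys \<Longrightarrow> xs = ys"
proof (induction xs arbitrary: ys)
  case Nil
  then show ?case by simp
next
  case (Cons x xs)
  then obtain y ys' where ys: "ys = y # ys'" by (cases ys) auto
  have "x \<in> set (y # ys')" using Cons.prems ys by auto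
  then have xy: "x = y \<or> le y x" using Cons.prems(2) ys by (auto simp: lt_ord_def)
  have "y \<in> set (x # xs)" using Cons.prems ys by auto
  then have "y = x \<or> le x y" using Cons.prems(1) by (auto simp: lt_ord_def)
  with xy have "x = y" using to_props(2)[OF TO] by blast
  moreover have "x \<notin> set xs" using Cons.prems(1) by (auto simp: lt_ord_def)
  moreover have "y \<notin> set ys'" using Cons.prems(2) ys by (auto simp: lt_ord_def)
  ultimately have "set xs = set ys'" using Cons.prems(3) ys by auto
  then have "xs = ys'" using Cons.IH Cons.prems ys by auto
  then show ?case using ys \<open>x = y\<close> by simp
qed

lemma min_exists:
  assumes TO: "term_ordering le"
  shows "finite T \<Longrightarrow> T \<noteq> {} \<Longrightarrow> \<exists>m\<in>T. \<forall>t\<in>T. le m t"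
proof (induction T rule: finite_ne_induct)
  case (singleton x)
  then show ?case using to_props(1)[OF TO] by auto
next
  case (insert x T)
  then obtain m where m: "m \<in> T" "\<forall>t\<in>T. le m t" by blast
  show ?case
  proof (cases "le x m")
    case True
    then show ?thesis using m to_props(1,3)[OF TO] by blast
  next
    case False
    then have "le m x" using to_props(4)[OF TO] by blast
    then show ?thesis using m by blast
  qed
qed

lemma sorted_exists:
  assumes TO: "term_ordering le"
  shows "finite T \<Longrightarrow> \<exists>ts. sorted_wrt (lt_ord le) ts \<and> set ts = T"
proof (induction T rule: finite_remove_induct)
  case empty
  then show ?case by simp
next
  case (remove A)
  obtain m where m: "m \<in> A" "\<forall>t\<in>A. le m t" using min_exists[OF TO remove(1,2)] by blast
  obtain ts where ts: "sorted_wrt (lt_ord le) ts" "set ts = A - {m}" using remove(4)[OF m(1)] by blast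
  have "\<forall>z\<in>set ts. lt_ord le m z" using ts m unfolding lt_ord_def by blast
  then have "sorted_wrt (lt_ord le) (m # ts)" using ts(1) by simp
  moreover have "set (m # ts) = A" using ts m by auto
  ultimately show ?case by blast
qed

lemma ordered_tuple_props:
  assumes TO: "term_ordering le" and "finite T"
  shows "sorted_wrt (lt_ord le) (ordered_tuple le T) \<and> set (ordered_tuple le T) = T"
proof -
  obtain ts where ts: "sorted_wrt (lt_ord le) ts" "set ts = T" using sorted_exists[OF TO assms(2)] by blast
  have "\<exists>!ts. sigma_ordered le ts \<and> set ts = T"
  proof (rule ex1I[of _ ts])
    show "sigma_ordered le ts \<and> set ts = T" using ts unfolding sigma_ordered_def by simp
    fix ys assume "sigma_ordered le ys \<and> set ys = T"
    then show "ys = ts" using sorted_unique[OF TO, of ys ts] ts unfolding sigma_ordered_def by simp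
  qed
  from theI'[OF this] show ?thesis unfolding ordered_tuple_def sigma_ordered_def .
qed

section \<open>Precedence\<close>

lemma precedes:
  assumes TO: "term_ordering le" and sg: "sorted_wrt (lt_ord le) Lg" and sm: "sorted_wrt (lt_ord le) Lm"
    and ne: "Lg \<noteq> Lm"
    and H: "\<And>m. m \<in> set Lm \<Longrightarrow> \<exists>g\<in>set Lg. le g m \<and> (g \<in> set Lm \<longrightarrow> g = m)"
  shows "sigma_precedes le Lg Lm"
proof -
  define Q where "Q k = (k = length Lg \<or> k = length Lm \<or> Lg ! k \<noteq> Lm ! k)" for k
  have Qmin: "Q (min (length Lg) (length Lm))" unfolding Q_def by auto
  define k where "k = (LEAST k. Q k)"
  have Qk: "Q k" unfolding k_def using Qmin by (rule LeastI)
  have kle: "k \<le> min (length Lg) (length Lm)" unfolding k_def using Qmin by (rule Least_le)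
  have pre: "Lg ! i = Lm ! i" if "i < k" for i
    using not_less_Least[OF that[unfolded k_def]] kle that unfolding Q_def by auto
  have tk: "take k Lg = take k Lm"
    by (rule nth_equalityI) (use kle pre in auto)
  have dm: "distinct Lm" using sorted_distinct[OF TO sm] .
  have dg: "distinct Lg" using sorted_distinct[OF TO sg] .
  show ?thesis
  proof (cases "k < length Lg \<and> k < length Lm")
    case True
    with Qk have neq: "Lg ! k \<noteq> Lm ! k" unfolding Q_def by auto
    let ?m = "Lm ! k"
    have "?m \<in> set Lm" using True by auto
    from H[OF this] obtain g where g: "g \<in> set Lg" "le g ?m" "g \<in> set Lm \<longrightarrow> g = ?m" by blast
    then obtain j where j: "j < length Lg" "g = Lg ! j" by (auto simp: in_set_conv_nth)
    have "lt_ord le (Lg ! k) ?m"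
    proof (cases j k rule: linorder_cases)
      case less
      then have "g = Lm ! j" using pre j by simp
      then have "g \<in> set Lm" using less kle by auto
      then have "Lm ! j = Lm ! k" using g \<open>g = Lm ! j\<close> by simp
      then show ?thesis using dm less True by (simp add: nth_eq_iff_index_eq)
    next
      case equal
      then show ?thesis using g j neq by (simp add: lt_ord_def)
    next
      case greater
      then have "lt_ord le (Lg ! k) g" using sorted_wrt_nth_less[OF sg greater] j by simp
      then have lk: "le (Lg ! k) g" "Lg ! k \<noteq> g" by (auto simp: lt_ord_def)
      then have "le (Lg ! k) ?m" using g to_props(3)[OF TO] by blast
      moreover have "Lg ! k \<noteq> ?m"
      proof
        assume "Lg ! k = ?m"
        then have "g = ?m" using lk g to_props(2)[OF TO] by metis
        then show False using lk \<open>Lg ! k = ?m\<close> by simp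
      qed
      ultimately show ?thesis by (simp add: lt_ord_def)
    qed
    then show ?thesis unfolding sigma_precedes_def using True tk by auto
  next
    case False
    then have kc: "k = length Lg \<or> k = length Lm" using kle by auto
    show ?thesis
    proof (cases "k = length Lm")
      case True
      show ?thesis
      proof (cases "k = length Lg")
        case True
        then show ?thesis using tk \<open>k = length Lm\<close> ne by simp
      next
        case False
        then have "length Lm < length Lg" using kle True by simp
        then show ?thesis unfolding sigma_precedes_def using tk True by simp
      qed
    next
      case False
      then have kg: "k = length Lg" "k < length Lm" using kc kle by auto
      let ?m = "Lm ! k"
      have "?m \<in> set Lm" using kg by auto
      from H[OF this] obtain g where g: "g \<in> set Lg" "le g ?m" "g \<in> set Lm \<longrightarrow> g = ?m" by blast
      then obtain j where j: "j < length Lg" "g = Lg ! j" by (auto simp: in_set_conv_nth)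
      then have "g = Lm ! j" using pre kg by simp
      then have "g \<in> set Lm" using j kg by auto
      then have "Lm ! j = Lm ! k" using g \<open>g = Lm ! j\<close> by simp
      then have False using dm j kg by (simp add: nth_eq_iff_index_eq)
      then show ?thesis ..
    qed
  qed
qed

theorem proposition4p6:
  fixes le :: "'x::finite pp \<Rightarrow> 'x pp \<Rightarrow> bool"
    and J F :: "('x, 'a::field) mpoly set"
  assumes "term_ordering le"
    and "is_ideal J"
    and "F \<subseteq> J"
    and "0 \<notin> F"
  shows "(O_ideal le J = O_set le F \<longleftrightarrow> groebner_basis le F J)
     \<and> (\<not> groebner_basis le F J \<longrightarrow> sigma_precedes le (O_ideal le J) (O_set le F))"
proof -
  note TO = assms(1)
  define P where "P t = (\<exists>f\<in>J - {0}. pp_dvd (LT le f) t)" for t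
  define G where "G = {t. P t \<and> \<not> (\<exists>s. s \<noteq> t \<and> pp_dvd s t \<and> P s)}"
  define M where "M = interreduction (LT le ` F)"
  have OJ: "O_ideal le J = ordered_tuple le G" unfolding O_ideal_def G_def P_def by simp
  have OFe: "O_set le F = ordered_tuple le M" unfolding O_set_def M_def by simp
  have Gi: "t \<in> G \<longleftrightarrow> P t \<and> \<not> (\<exists>s. s \<noteq> t \<and> pp_dvd s t \<and> P s)" for t
    unfolding G_def by simp
  have Mi: "t \<in> M \<longleftrightarrow> t \<in> LT le ` F \<and> \<not> (\<exists>s\<in>LT le ` F. s \<noteq> t \<and> pp_dvd s t)" for t
    unfolding M_def interreduction_def by simp
  have fG: "finite G"
  proof (rule antichain_finite)
    fix a b assume "a \<in> G" "b \<in> G" "pp_dvd a b"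
    then show "a = b" using Gi[of a] Gi[of b] by blast
  qed
  have fM: "finite M"
  proof (rule antichain_finite)
    fix a b assume "a \<in> M" "b \<in> M" "pp_dvd a b"
    then show "a = b" using Mi[of a] Mi[of b] by blast
  qed
  have FJ: "F \<subseteq> J - {0}" using assms(3,4) by blast
  have PLT: "P (LT le h)" if "h \<in> J - {0}" for h
    unfolding P_def using that pp_dvd_refl by blast
  have minG: "\<exists>g\<in>G. pp_dvd g t" if Pt: "P t" for t
  proof -
    obtain g where "P g \<and> \<not> (\<exists>s. s \<noteq> g \<and> pp_dvd s g \<and> P s) \<and> pp_dvd g t"
      using minimal_divisor[of P t, OF Pt] by blast
    then show ?thesis using Gi[of g] by blast
  qed
  have PM: "P m" if "m \<in> M" for m
  proof -
    from that Mi obtain h where "h \<in> F" "m = LT le h" by blast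
    then show ?thesis using PLT FJ by blast
  qed
  have GM_GB: "G = M" if GB: "groebner_basis le F J"
  proof -
    have GsM: "g \<in> M" if "g \<in> G" for g
    proof -
      from that Gi have Pg: "P g" and mg: "\<not> (\<exists>s. s \<noteq> g \<and> pp_dvd s g \<and> P s)" by blast+
      from Pg obtain f where f: "f \<in> J - {0}" "pp_dvd (LT le f) g" unfolding P_def by blast
      have "LT le f = g" using mg f PLT[OF f(1)] by blast
      from GB f(1) obtain h where h: "h \<in> F" "pp_dvd (LT le h) (LT le f)"
        unfolding groebner_basis_def by blast
      have "LT le h = g" using mg h PLT FJ \<open>LT le f = g\<close> by blast
      then have "g \<in> LT le ` F" using h by blast
      moreover have "\<not> (\<exists>s\<in>LT le ` F. s \<noteq> g \<and> pp_dvd s g)"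
      proof
        assume "\<exists>s\<in>LT le ` F. s \<noteq> g \<and> pp_dvd s g"
        then obtain h' where "h' \<in> F" "LT le h' \<noteq> g" "pp_dvd (LT le h') g" by blast
        then show False using mg PLT FJ by blast
      qed
      ultimately show ?thesis using Mi by blast
    qed
    moreover have "m \<in> G" if mM: "m \<in> M" for m
    proof -
      obtain g where g: "g \<in> G" "pp_dvd g m" using minG PM[OF mM] by blast
      have "g \<in> M" using GsM g(1) by blast
      then have "g \<in> LT le ` F" using Mi by blast
      then have "g = m" using mM Mi[of m] g(2) by blast
      then show ?thesis using g by simp
    qed
    ultimately show ?thesis by blast
  qed
  have GB_GM: "groebner_basis le F J" if "G = M"
    unfolding groebner_basis_def
  proof (intro conjI ballI)
    show "F \<subseteq> J - {0}" by (rule FJ)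
    fix f assume f: "f \<in> J - {0}"
    obtain g where g: "g \<in> G" "pp_dvd g (LT le f)" using minG PLT[OF f] by blast
    then have "g \<in> LT le ` F" using that Mi by blast
    then show "\<exists>g\<in>F. pp_dvd (LT le g) (LT le f)" using g(2) by blast
  qed
  have pG: "sorted_wrt (lt_ord le) (ordered_tuple le G) \<and> set (ordered_tuple le G) = G"
    by (rule ordered_tuple_props[OF TO fG])
  have pM: "sorted_wrt (lt_ord le) (ordered_tuple le M) \<and> set (ordered_tuple le M) = M"
    by (rule ordered_tuple_props[OF TO fM])
  have eqiff: "ordered_tuple le G = ordered_tuple le M \<longleftrightarrow> G = M"
  proof
    assume "ordered_tuple le G = ordered_tuple le M"
    then show "G = M" using pG pM by metis
  qed simp
  have part_a: "O_ideal le J = O_set le F \<longleftrightarrow> groebner_basis le F J"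
    unfolding OJ OFe eqiff using GM_GB GB_GM by blast
  have part_b: "sigma_precedes le (O_ideal le J) (O_set le F)" if nGB: "\<not> groebner_basis le F J"
    unfolding OJ OFe
  proof (rule precedes[OF TO])
    show "sorted_wrt (lt_ord le) (ordered_tuple le G)" using pG by blast
    show "sorted_wrt (lt_ord le) (ordered_tuple le M)" using pM by blast
    show "ordered_tuple le G \<noteq> ordered_tuple le M" using eqiff GB_GM nGB by blast
    fix m assume "m \<in> set (ordered_tuple le M)"
    then have m: "m \<in> M" using pM by blast
    obtain g where g: "g \<in> G" "pp_dvd g m" using minG PM[OF m] by blast
    have "le g m" using to_props(5)[OF TO g(2)] .
    moreover have "g \<in> M \<longrightarrow> g = m"
    proof
      assume "g \<in> M"
      then have "g \<in> LT le ` F" using Mi by blast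
      then show "g = m" using m Mi[of m] g(2) by blast
    qed
    ultimately show "\<exists>g\<in>set (ordered_tuple le G). le g m \<and> (g \<in> set (ordered_tuple le M) \<longrightarrow> g = m)"
      using g(1) pG pM by blast
  qed
  show ?thesis using part_a part_b by blast
qed

end
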